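(* Let $n\ge 1$ and let $t_1,\dots,t_n$ be formal variables, with $\bar t_i:=t_i^{-1}$. Let $b=\prod_{\alpha=1}^k\sigma_{i_\alpha}^{s_\alpha}$ be a braid in the braid group $B_n$, written as a word in the standard generators $\sigma_1,\dots,\sigma_{n-1}$ with signs $s_\alpha\in\{+1,-1\}$ (product taken from left to right, i.e. from the bottom of the braid to the top). Let $\tau=[\tau 1,\dots,\tau n]$ be the permutation induced by $b$ (as defined in the context), let $\gamma=\Gamma(b)$ be the Gassner invariant of $b$, and let $\iota=[1,2,\dots,n]$ be the identity permutation. Then $$\Omega(\tau)\,\gamma^{-1}=\bar{\gamma}^T\,\Omega(\iota),\qquad\text{equivalently}\qquad \gamma^{-1}=\Omega(\tau)^{-1}\,\bar\gamma^T\,\Omega(\iota),$$ where $\bar\gamma$ is obtained from $\gamma$ by the substitution $t_i\mapsto t_i^{-1}$ for all $i$, and $\bar\gamma^T$ is its transpose.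
   Context: The braid group $B_n$ has generators $\sigma_1,\dots,\sigma_{n-1}$ and relations $\sigma_i\sigma_j=\sigma_j\sigma_i$ for $|i-j|>1$ and $\sigma_i\sigma_{i+1}\sigma_i=\sigma_{i+1}\sigma_i\sigma_{i+1}$. Strands are indexed $1,\dots,n$ at the bottom of the braid. Reading the word $b=\prod_{\alpha=1}^k\sigma_{i_\alpha}^{s_\alpha}$ from left to right (bottom to top), track which strand occupies each position: initially position $p$ holds strand $p$; the letter $\sigma_{i}^{\pm1}$ is a crossing of the strands at positions $i$ and $i+1$ (as counted just below that crossing), after which these two strands swap positions. For crossing number $\alpha$, let $j_\alpha$ be the index of the over strand: it is the strand at position $i_\alpha$ just below the crossing if $s_\alpha=+1$, and the strand at position $i_\alpha+1$ just below the crossing if $s_\alpha=-1$. The induced permutation $\tau=[\tau1,\dots,\tau n]$ is defined by: after all $k$ crossings (at the top of the braid), position $p$ holds strand $\tau p$. For a variable $t$ and $1\le i\le n-1$, $U_i(t)$ is the $n\times n$ identity matrix with its $2\times2$ block in rows and columns $i,i+1$ replaced by $\begin{pmatrix}1-t&1\\ t&0\end{pmatrix}$; its inverse $U_i^{-1}(t)$ is the identity matrix with that block replaced by $\begin{pmatrix}0&t^{-1}\\ 1&1-t^{-1}\end{pmatrix}$. The Gassner invariant of $b$ is the matrix $\Gamma(b):=\prod_{\alpha=1}^k U_{i_\alpha}^{s_\alpha}(t_{j_\alpha})$ (product from left to right), with entries Laurent polynomials in $t_1,\dots,t_n$ over $\mathbb Z$. For a permutation $\tau=[\tau1,\dots,\tau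 n]$ of $1,\dots,n$, $\Omega(\tau)$ is the lower-triangular $n\times n$ matrix whose diagonal entries are $\Omega(\tau)_{pp}=(1-t_{\tau p})^{-1}$, whose entries below the diagonal are all $1$, and whose entries above the diagonal are all $0$. *)

theory Defs
  imports "Jordan_Normal_Form.Gauss_Jordan_Elimination"
begin

text \<open>A braid word is a list of letters (i, s): the generator sigma_i raised to the
  sign s (s = 1 or s = -1), read from left to right (bottom to top).
  Positions and strands are numbered 1..n.  A matrix index r (0-based, as in
  Jordan_Normal_Form) corresponds to the paper's index r+1.
  Formal variables t_1..t_n are rendered as values t i in an arbitrary field.\<close>

type_synonym braid_word = "(nat \<times> int) list"

definition valid_braid_word :: "nat \<Rightarrow> braid_word \<Rightarrow> bool" where
  "valid_braid_word n w \<longleftrightarrow>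
     (\<forall>(i, s) \<in> set w. 1 \<le> i \<and> i \<le> n - 1 \<and> (s = 1 \<or> s = -1))"

text \<open>Position map after a crossing: pos p = strand at position p.\<close>
definition cross_pos :: "(nat \<Rightarrow> nat) \<Rightarrow> nat \<Rightarrow> (nat \<Rightarrow> nat)" where
  "cross_pos pos i = pos \<circ> Transposition.transpose i (i + 1)"

fun positions_after :: "(nat \<Rightarrow> nat) \<Rightarrow> braid_word \<Rightarrow> (nat \<Rightarrow> nat)" where
  "positions_after pos [] = pos"
| "positions_after pos ((i, s) # w) = positions_after (cross_pos pos i) w"

text \<open>Induced permutation tau: position p at the top holds strand tau p.\<close>
definition induced_perm :: "braid_word \<Rightarrow> nat \<Rightarrow> nat" where
  "induced_perm w = positions_after id w"

definition over_strand :: "(nat \<Rightarrow> nat) \<Rightarrow> nat \<Rightarrow> int \<Rightarrow> nat" where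
  "over_strand pos i s = (if s = 1 then pos i else pos (i + 1))"

text \<open>U_i(x) and U_i^{-1}(x) as n x n matrices (paper indices i, i+1 are
  0-based indices i-1, i).\<close>
definition U_mat :: "nat \<Rightarrow> nat \<Rightarrow> 'a::field \<Rightarrow> 'a mat" where
  "U_mat n i x = mat n n (\<lambda>(r, c).
     if r = i - 1 \<and> c = i - 1 then 1 - x
     else if r = i - 1 \<and> c = i then 1
     else if r = i \<and> c = i - 1 then x
     else if r = i \<and> c = i then 0
     else if r = c then 1 else 0)"

definition U_inv_mat :: "nat \<Rightarrow> nat \<Rightarrow> 'a::field \<Rightarrow> 'a mat" where
  "U_inv_mat n i x = mat n n (\<lambda>(r, c).
     if r = i - 1 \<and> c = i - 1 then 0
     else if r = i - 1 \<and> c = i then inverse x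
     else if r = i \<and> c = i - 1 then 1
     else if r = i \<and> c = i then 1 - inverse x
     else if r = c then 1 else 0)"

definition U_pow :: "nat \<Rightarrow> nat \<Rightarrow> int \<Rightarrow> 'a::field \<Rightarrow> 'a mat" where
  "U_pow n i s x = (if s = 1 then U_mat n i x else U_inv_mat n i x)"

fun gassner_aux :: "nat \<Rightarrow> (nat \<Rightarrow> 'a::field) \<Rightarrow> (nat \<Rightarrow> nat) \<Rightarrow> braid_word \<Rightarrow> 'a mat" where
  "gassner_aux n t pos [] = 1\<^sub>m n"
| "gassner_aux n t pos ((i, s) # w) =
     U_pow n i s (t (over_strand pos i s)) * gassner_aux n t (cross_pos pos i) w"

definition gassner :: "nat \<Rightarrow> (nat \<Rightarrow> 'a::field) \<Rightarrow> braid_word \<Rightarrow> 'a mat" where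
  "gassner n t w = gassner_aux n t id w"

definition Omega :: "nat \<Rightarrow> (nat \<Rightarrow> 'a::field) \<Rightarrow> (nat \<Rightarrow> nat) \<Rightarrow> 'a mat" where
  "Omega n t tau = mat n n (\<lambda>(r, c).
     if r = c then inverse (1 - t (tau (r + 1)))
     else if c < r then 1 else 0)"

end

theory Submission
  imports Defs
begin

lemma sum_two:
  assumes "a < (n::nat)" "b < n" "a \<noteq> b" "\<And>k. k < n \<Longrightarrow> k \<noteq> a \<Longrightarrow> k \<noteq> b \<Longrightarrow> f k = 0"
  shows "sum f {0..<n} = f a + f b"
proof -
  have "sum f {0..<n} = sum f {a,b}"
    by (rule sum.mono_neutral_right) (use assms in auto)
  thus ?thesis using assms by simp
qed

lemma sum_one:
  assumes "a < (n::nat)" "\<And>k. k < n \<Longrightarrow> k \<noteq> a \<Longrightarrow> f k = 0"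
  shows "sum f {0..<n} = f a"
proof -
  have "sum f {0..<n} = sum f {a}"
    by (rule sum.mono_neutral_right) (use assms in auto)
  thus ?thesis using assms by simp
qed

lemma mult_entry:
  assumes "A \<in> carrier_mat n n" "B \<in> carrier_mat n n" "r < n" "c < n"
  shows "(A * B) $$ (r,c) = (\<Sum>k\<in>{0..<n}. A $$ (r,k) * B $$ (k,c))"
  using assms by (simp add: scalar_prod_def)

lemma U_carrier[simp]: "U_mat n i x \<in> carrier_mat n n" "U_inv_mat n i x \<in> carrier_mat n n"
  "U_pow n i s x \<in> carrier_mat n n" "Omega n t pos \<in> carrier_mat n n"
  by (auto simp: U_mat_def U_inv_mat_def U_pow_def Omega_def)

lemma U_dims[simp]: "dim_row (U_mat n i x) = n" "dim_col (U_mat n i x) = n"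
  "dim_row (U_inv_mat n i x) = n" "dim_col (U_inv_mat n i x) = n"
  "dim_row (U_pow n i s x) = n" "dim_col (U_pow n i s x) = n"
  "dim_row (Omega n t pos) = n" "dim_col (Omega n t pos) = n"
  by (auto simp: U_mat_def U_inv_mat_def U_pow_def Omega_def)

lemma R1:
  assumes A: "A \<in> carrier_mat n n" and i: "1 \<le> i" "i < n"
  shows "A * U_mat n i x = mat n n (\<lambda>(r,c). if c = i - 1 then A$$(r,i-1)*(1-x) + A$$(r,i)*x
      else if c = i then A$$(r,i-1) else A$$(r,c))"
proof (rule eq_matI)
  fix r c assume rc: "r < dim_row (mat n n (\<lambda>(r,c). if c = i - 1 then A$$(r,i-1)*(1-x) + A$$(r,i)*x
      else if c = i then A$$(r,i-1) else A$$(r,c)))" "c < dim_col (mat n n (\<lambda>(r,c). if c = i - 1 then A$$(r,i-1)*(1-x) + A$$(r,i)*x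
      else if c = i then A$$(r,i-1) else A$$(r,c)))"
  hence r: "r < n" and c: "c < n" by auto
  have e: "(A * U_mat n i x) $$ (r,c) = (\<Sum>k\<in>{0..<n}. A $$ (r,k) * U_mat n i x $$ (k,c))"
    by (rule mult_entry[OF A _ r c]) simp
  show "(A * U_mat n i x) $$ (r,c) = mat n n (\<lambda>(r,c). if c = i - 1 then A$$(r,i-1)*(1-x) + A$$(r,i)*x
      else if c = i then A$$(r,i-1) else A$$(r,c)) $$ (r,c)"
  proof (cases "c = i - 1")
    case True
    show ?thesis unfolding e
      by (subst sum_two[of "i-1" n i]) (use i r c True in \<open>auto simp: U_mat_def\<close>)
  next
    case F1: False
    show ?thesis
    proof (cases "c = i")
      case True
      show ?thesis unfolding e
        by (subst sum_one[of "i-1" n]) (use i r c True in \<open>auto simp: U_mat_def\<close>)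
    next
      case False
      show ?thesis unfolding e
        by (subst sum_one[of c n]) (use i r c F1 False in \<open>auto simp: U_mat_def\<close>)
    qed
  qed
qed (use A in auto)

lemma R2:
  assumes A: "A \<in> carrier_mat n n" and i: "1 \<le> i" "i < n"
  shows "A * U_inv_mat n i x = mat n n (\<lambda>(r,c). if c = i - 1 then A$$(r,i)
      else if c = i then A$$(r,i-1)*inverse x + A$$(r,i)*(1-inverse x) else A$$(r,c))"
proof (rule eq_matI)
  fix r c assume rc: "r < dim_row (mat n n (\<lambda>(r,c). if c = i - 1 then A$$(r,i)
      else if c = i then A$$(r,i-1)*inverse x + A$$(r,i)*(1-inverse x) else A$$(r,c)))" "c < dim_col (mat n n (\<lambda>(r,c). if c = i - 1 then A$$(r,i)
      else if c = i then A$$(r,i-1)*inverse x + A$$(r,i)*(1-inverse x) else A$$(r,c)))"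
  hence r: "r < n" and c: "c < n" by auto
  have e: "(A * U_inv_mat n i x) $$ (r,c) = (\<Sum>k\<in>{0..<n}. A $$ (r,k) * U_inv_mat n i x $$ (k,c))"
    by (rule mult_entry[OF A _ r c]) simp
  show "(A * U_inv_mat n i x) $$ (r,c) = mat n n (\<lambda>(r,c). if c = i - 1 then A$$(r,i)
      else if c = i then A$$(r,i-1)*inverse x + A$$(r,i)*(1-inverse x) else A$$(r,c)) $$ (r,c)"
  proof (cases "c = i - 1")
    case True
    show ?thesis unfolding e
      by (subst sum_one[of i n]) (use i r c True in \<open>auto simp: U_inv_mat_def\<close>)
  next
    case F1: False
    show ?thesis
    proof (cases "c = i")
      case True
      show ?thesis unfolding e
        by (subst sum_two[of "i-1" n i]) (use i r c True in \<open>auto simp: U_inv_mat_def\<close>)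
    next
      case False
      show ?thesis unfolding e
        by (subst sum_one[of c n]) (use i r c F1 False in \<open>auto simp: U_inv_mat_def\<close>)
    qed
  qed
qed (use A in auto)

lemma L1:
  assumes A: "A \<in> carrier_mat n n" and i: "1 \<le> i" "i < n"
  shows "transpose_mat (U_mat n i x) * A = mat n n (\<lambda>(r,c). if r = i - 1 then (1-x)*A$$(i-1,c) + x*A$$(i,c)
      else if r = i then A$$(i-1,c) else A$$(r,c))"
proof -
  have "transpose_mat (U_mat n i x) * A = transpose_mat (transpose_mat A * U_mat n i x)"
    using A by (simp add: transpose_mult[of _ n n _ n])
  also have "\<dots> = transpose_mat (mat n n (\<lambda>(r,c). if c = i - 1 then transpose_mat A$$(r,i-1)*(1-x) + transpose_mat A$$(r,i)*x
      else if c = i then transpose_mat A$$(r,i-1) else transpose_mat A$$(r,c)))"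
    using A i by (subst R1) auto
  also have "\<dots> = mat n n (\<lambda>(r,c). if r = i - 1 then (1-x)*A$$(i-1,c) + x*A$$(i,c)
      else if r = i then A$$(i-1,c) else A$$(r,c))"
    using A i by (intro eq_matI) (auto simp: mult.commute)
  finally show ?thesis .
qed

lemma L2:
  assumes A: "A \<in> carrier_mat n n" and i: "1 \<le> i" "i < n"
  shows "transpose_mat (U_inv_mat n i x) * A = mat n n (\<lambda>(r,c). if r = i - 1 then A$$(i,c)
      else if r = i then inverse x * A$$(i-1,c) + (1 - inverse x)*A$$(i,c) else A$$(r,c))"
proof -
  have "transpose_mat (U_inv_mat n i x) * A = transpose_mat (transpose_mat A * U_inv_mat n i x)"
    using A by (simp add: transpose_mult[of _ n n _ n])
  also have "\<dots> = transpose_mat (mat n n (\<lambda>(r,c). if c = i - 1 then transpose_mat A$$(r,i)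
      else if c = i then transpose_mat A$$(r,i-1)*inverse x + transpose_mat A$$(r,i)*(1-inverse x) else transpose_mat A$$(r,c)))"
    using A i by (subst R2) auto
  also have "\<dots> = mat n n (\<lambda>(r,c). if r = i - 1 then A$$(i,c)
      else if r = i then inverse x * A$$(i-1,c) + (1 - inverse x)*A$$(i,c) else A$$(r,c))"
    using A i by (intro eq_matI) (auto simp: mult.commute)
  finally show ?thesis .
qed


lemma local1:
  assumes i: "1 \<le> i" "i < n" and t0: "t (pos i) \<noteq> 0" and t1: "t (pos i) \<noteq> 1"
  shows "Omega n t (cross_pos pos i) =
    transpose_mat (U_mat n i (inverse (t (pos i)))) * Omega n t pos * U_mat n i (t (pos i))"
proof -
  have "transpose_mat (U_mat n i (inverse (t (pos i)))) * Omega n t pos * U_mat n i (t (pos i))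
     = transpose_mat (U_mat n i (inverse (t (pos i)))) * (Omega n t pos * U_mat n i (t (pos i)))"
    by (rule assoc_mult_mat[of _ n n _ n _ n]) auto
  also have "\<dots> = Omega n t (cross_pos pos i)"
    apply (subst R1[OF _ i]) apply simp
    apply (subst L1[OF _ i]) apply simp
    apply (rule eq_matI)
    using i t0 t1
     apply (auto simp: Omega_def cross_pos_def Transposition.transpose_def field_simps)
    done
  finally show ?thesis by simp
qed


lemma div_helper: "(b::'a::field) \<noteq> 0 \<Longrightarrow> b / (b - a * b) = 1 / (1 - a)"
proof -
  assume b: "b \<noteq> 0"
  have "b - a * b = b * (1 - a)" by (simp add: algebra_simps)
  thus ?thesis using b by simp
qed

lemma local2:
  assumes i: "1 \<le> i" "i < n" and t0: "t (pos (i+1)) \<noteq> 0" and t1: "t (pos (i+1)) \<noteq> 1"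
  shows "Omega n t (cross_pos pos i) =
    transpose_mat (U_inv_mat n i (inverse (t (pos (i+1))))) * Omega n t pos * U_inv_mat n i (t (pos (i+1)))"
proof -
  have "transpose_mat (U_inv_mat n i (inverse (t (pos (i+1))))) * Omega n t pos * U_inv_mat n i (t (pos (i+1)))
     = transpose_mat (U_inv_mat n i (inverse (t (pos (i+1))))) * (Omega n t pos * U_inv_mat n i (t (pos (i+1))))"
    by (rule assoc_mult_mat[of _ n n _ n _ n]) auto
  also have "\<dots> = Omega n t (cross_pos pos i)"
    apply (subst R2[OF _ i]) apply simp
    apply (subst L2[OF _ i]) apply simp
    apply (rule eq_matI)
    using i t0 t1
     apply (auto simp: Omega_def cross_pos_def Transposition.transpose_def field_simps div_helper)
    done
  finally show ?thesis by simp
qed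

lemma local_pow:
  assumes i: "1 \<le> i" "i < n" and s: "s = 1 \<or> s = -1"
    and t0: "t (over_strand pos i s) \<noteq> 0" and t1: "t (over_strand pos i s) \<noteq> 1"
  shows "Omega n t (cross_pos pos i) =
    transpose_mat (U_pow n i s (inverse (t (over_strand pos i s))))
      * Omega n t pos * U_pow n i s (t (over_strand pos i s))"
  using s
proof
  assume "s = 1" thus ?thesis using local1[OF i] t0 t1 by (simp add: U_pow_def over_strand_def)
next
  assume "s = -1" thus ?thesis using local2[OF i] t0 t1 by (simp add: U_pow_def over_strand_def)
qed

lemma gassner_aux_carrier[simp]: "gassner_aux n t pos w \<in> carrier_mat n n"
  by (induction w arbitrary: pos) (auto intro!: mult_carrier_mat[of _ n n])

lemma main_gen:
  assumes "valid_braid_word n w" and "\<forall>p\<in>{1..n}. pos p \<in> {1..n}"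
    and "\<forall>i\<in>{1..n}. t i \<noteq> 0 \<and> t i \<noteq> 1"
  shows "Omega n t (positions_after pos w) =
    transpose_mat (gassner_aux n (\<lambda>i. inverse (t i)) pos w) * Omega n t pos * gassner_aux n t pos w"
  using assms(1,2)
proof (induction w arbitrary: pos)
  case Nil
  then show ?case by simp
next
  case (Cons a w)
  obtain i s where a: "a = (i,s)" by (cases a)
  have i: "1 \<le> i" "i < n" and s: "s = 1 \<or> s = -1" and vw: "valid_braid_word n w"
    using Cons.prems(1) a by (auto simp: valid_braid_word_def)
  have posi: "pos i \<in> {1..n}" "pos (i+1) \<in> {1..n}" using Cons.prems(2) i by auto
  have os: "over_strand pos i s \<in> {1..n}" using posi by (simp add: over_strand_def)
  have cp: "\<forall>p\<in>{1..n}. cross_pos pos i p \<in> {1..n}"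
    using Cons.prems(2) i by (auto simp: cross_pos_def Transposition.transpose_def)
  define x where "x = t (over_strand pos i s)"
  define U where "U = U_pow n i s x"
  define Ub where "Ub = U_pow n i s (inverse x)"
  define G where "G = gassner_aux n t (cross_pos pos i) w"
  define Gb where "Gb = gassner_aux n (\<lambda>i. inverse (t i)) (cross_pos pos i) w"
  have x: "x \<noteq> 0" "x \<noteq> 1" using os assms(3) x_def by auto
  have IH: "Omega n t (positions_after pos (a # w)) = transpose_mat Gb * Omega n t (cross_pos pos i) * G"
    using Cons.IH[OF vw cp] a G_def Gb_def by simp
  have loc: "Omega n t (cross_pos pos i) = transpose_mat Ub * Omega n t pos * U"
    using local_pow[of i n s t pos, OF i s x(1,2)[unfolded x_def]] unfolding U_def Ub_def x_def .
  have C: "U \<in> carrier_mat n n" "Ub \<in> carrier_mat n n" "G \<in> carrier_mat n n" "Gb \<in> carrier_mat n n"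
    "Omega n t pos \<in> carrier_mat n n"
    by (auto simp: U_def Ub_def G_def Gb_def)
  have "Omega n t (positions_after pos (a # w)) = transpose_mat Gb * (transpose_mat Ub * Omega n t pos * U) * G"
    using IH loc by simp
  also have "\<dots> = transpose_mat (Ub * Gb) * Omega n t pos * (U * G)"
  proof -
    have T: "transpose_mat (Ub * Gb) = transpose_mat Gb * transpose_mat Ub"
      using C by (simp add: transpose_mult[of _ n n _ n])
    have C2: "transpose_mat Gb \<in> carrier_mat n n" "transpose_mat Ub \<in> carrier_mat n n"
      "Omega n t pos * U \<in> carrier_mat n n" "transpose_mat Ub * Omega n t pos \<in> carrier_mat n n"
      using C by auto
    have "transpose_mat Gb * (transpose_mat Ub * Omega n t pos * U) * G
        = transpose_mat Gb * ((transpose_mat Ub * Omega n t pos * U) * G)"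
      using C C2 by (intro assoc_mult_mat[of _ n n _ n _ n]) auto
    also have "(transpose_mat Ub * Omega n t pos * U) * G = (transpose_mat Ub * Omega n t pos) * (U * G)"
      using C C2 by (intro assoc_mult_mat[of _ n n _ n _ n]) auto
    also have "transpose_mat Gb * ((transpose_mat Ub * Omega n t pos) * (U * G))
        = (transpose_mat Gb * (transpose_mat Ub * Omega n t pos)) * (U * G)"
      using C C2 by (intro assoc_mult_mat[of _ n n _ n _ n, symmetric]) auto
    also have "transpose_mat Gb * (transpose_mat Ub * Omega n t pos) = (transpose_mat Gb * transpose_mat Ub) * Omega n t pos"
      using C C2 by (intro assoc_mult_mat[of _ n n _ n _ n, symmetric]) auto
    finally show ?thesis unfolding T .
  qed
  also have "\<dots> = transpose_mat (gassner_aux n (\<lambda>i. inverse (t i)) pos (a # w)) * Omega n t pos * gassner_aux n t pos (a # w)"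
    by (simp add: a U_def Ub_def G_def Gb_def x_def)
  finally show ?case .
qed


lemma U_U_inv: assumes i: "1 \<le> i" "i < n" and x: "x \<noteq> 0"
  shows "U_mat n i x * U_inv_mat n i x = 1\<^sub>m n" "U_inv_mat n i x * U_mat n i x = 1\<^sub>m n"
proof -
  show "U_mat n i x * U_inv_mat n i x = 1\<^sub>m n"
    apply (subst R2[OF _ i]) apply simp
    apply (rule eq_matI) using i x by (auto simp: U_mat_def field_simps)
  show "U_inv_mat n i x * U_mat n i x = 1\<^sub>m n"
    apply (subst R1[OF _ i]) apply simp
    apply (rule eq_matI) using i x by (auto simp: U_inv_mat_def field_simps)
qed

lemma U_pow_inv: assumes i: "1 \<le> i" "i < n" and x: "x \<noteq> 0"
  shows "\<exists>B\<in>carrier_mat n n. U_pow n i s x * B = 1\<^sub>m n \<and> B * U_pow n i s x = 1\<^sub>m n"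
proof (cases "s = 1")
  case True thus ?thesis using U_U_inv[OF i x] by (intro bexI[of _ "U_inv_mat n i x"]) (auto simp: U_pow_def)
next
  case False thus ?thesis using U_U_inv[OF i x] by (intro bexI[of _ "U_mat n i x"]) (auto simp: U_pow_def)
qed

lemma gassner_inv:
  assumes "valid_braid_word n w" and "\<forall>p\<in>{1..n}. pos p \<in> {1..n}"
    and "\<forall>i\<in>{1..n}. t i \<noteq> 0 \<and> t i \<noteq> 1"
  shows "\<exists>B\<in>carrier_mat n n. gassner_aux n t pos w * B = 1\<^sub>m n \<and> B * gassner_aux n t pos w = 1\<^sub>m n"
  using assms(1,2)
proof (induction w arbitrary: pos)
  case Nil
  then show ?case by (intro bexI[of _ "1\<^sub>m n"]) auto
next
  case (Cons a w)
  obtain i s where a: "a = (i,s)" by (cases a)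
  have i: "1 \<le> i" "i < n" and vw: "valid_braid_word n w"
    using Cons.prems(1) a by (auto simp: valid_braid_word_def)
  have posi: "pos i \<in> {1..n}" "pos (i+1) \<in> {1..n}" using Cons.prems(2) i by auto
  have os: "over_strand pos i s \<in> {1..n}" using posi by (simp add: over_strand_def)
  have cp: "\<forall>p\<in>{1..n}. cross_pos pos i p \<in> {1..n}"
    using Cons.prems(2) i by (auto simp: cross_pos_def Transposition.transpose_def)
  define U where "U = U_pow n i s (t (over_strand pos i s))"
  define G where "G = gassner_aux n t (cross_pos pos i) w"
  obtain B where B: "B \<in> carrier_mat n n" "G * B = 1\<^sub>m n" "B * G = 1\<^sub>m n"
    using Cons.IH[OF vw cp] G_def by auto
  obtain V where V: "V \<in> carrier_mat n n" "U * V = 1\<^sub>m n" "V * U = 1\<^sub>m n"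
    using U_pow_inv[OF i, of "t (over_strand pos i s)" s] os assms(3) U_def by auto
  have C: "U \<in> carrier_mat n n" "G \<in> carrier_mat n n" by (auto simp: U_def G_def)
  have "(U * G) * (B * V) = U * (G * (B * V))"
    using C B V by (intro assoc_mult_mat[of _ n n _ n _ n]) auto
  also have "G * (B * V) = (G * B) * V"
    using C B V by (intro assoc_mult_mat[of _ n n _ n _ n, symmetric]) auto
  finally have 1: "(U * G) * (B * V) = 1\<^sub>m n" using B V C by simp
  have "(B * V) * (U * G) = B * (V * (U * G))"
    using C B V by (intro assoc_mult_mat[of _ n n _ n _ n]) auto
  also have "V * (U * G) = (V * U) * G"
    using C B V by (intro assoc_mult_mat[of _ n n _ n _ n, symmetric]) auto
  finally have 2: "(B * V) * (U * G) = 1\<^sub>m n" using B V C by simp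
  show ?case using 1 2 B V by (intro bexI[of _ "B * V"]) (auto simp: a U_def G_def)
qed

theorem mainTheorem1:
  fixes n :: nat and t :: "nat \<Rightarrow> 'a::field" and w :: braid_word
  assumes "n \<ge> 1"
    and "valid_braid_word n w"
    and "\<forall>i\<in>{1..n}. t i \<noteq> 0 \<and> t i \<noteq> 1"
  shows "\<exists>G. mat_inverse (gassner n t w) = Some G \<and>
           Omega n t (induced_perm w) * G =
             transpose_mat (gassner n (\<lambda>i. inverse (t i)) w) * Omega n t id"
proof -
  have idp: "\<forall>p\<in>{1..n}. id p \<in> {1..n}" by simp
  define g where "g = gassner n t w"
  define gb where "gb = gassner n (\<lambda>i. inverse (t i)) w"
  have gc: "g \<in> carrier_mat n n" "gb \<in> carrier_mat n n" by (auto simp: g_def gb_def gassner_def)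
  obtain B where B: "B \<in> carrier_mat n n" "g * B = 1\<^sub>m n" "B * g = 1\<^sub>m n"
    using gassner_inv[OF assms(2) idp assms(3)] unfolding g_def gassner_def by blast
  have "mat_inverse g \<noteq> None"
  proof
    assume "mat_inverse g = None"
    from mat_inverse(1)[OF gc(1) this, of "()"] B gc show False
      by (auto simp: Units_def ring_mat_def)
  qed
  then obtain G where G: "mat_inverse g = Some G" by auto
  from mat_inverse(2)[OF gc(1) G] have gG: "g * G = 1\<^sub>m n" and Gc: "G \<in> carrier_mat n n" by auto
  have om: "Omega n t (induced_perm w) = transpose_mat gb * Omega n t id * g"
    using main_gen[OF assms(2) idp assms(3)] unfolding induced_perm_def gassner_def g_def gb_def .
  have "Omega n t (induced_perm w) * G = (transpose_mat gb * Omega n t id) * (g * G)"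
    unfolding om using gc Gc by (intro assoc_mult_mat[of _ n n _ n _ n]) auto
  also have "\<dots> = transpose_mat gb * Omega n t id" using gG gc by simp
  finally show ?thesis using G unfolding g_def gb_def by auto
qed

end
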